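(* Let $A$ be a pre-Lie commutative algebra, with operations $\circ$ and $\cdot$. Then $A$, equipped with the product $\circ$ and the bracket $[a_1,a_2]=a_1\cdot a_2-a_2\cdot a_1$, is an $F$-manifold algebra: $\circ$ is commutative and associative, $[-,-]$ is skew-symmetric and satisfies the Jacobi identity, and the Hertling--Manin relation $P_{a_1\circ a_2}(a_3,a_4)=a_1\circ P_{a_2}(a_3,a_4)+a_2\circ P_{a_1}(a_3,a_4)$ holds for all $a_1,a_2,a_3,a_4\in A$, where $P_{a_1}(a_2,a_3)=[a_1,a_2\circ a_3]-[a_1,a_2]\circ a_3-a_2\circ[a_1,a_3]$.
   Context: Work over a field of characteristic zero (with the Koszul sign rule if the algebra is graded; the identities are written here for even elements). A pre-Lie commutative algebra is a vector space $A$ with a commutative binary operation $\circ$ and a binary operation $\cdot$ (no symmetry) satisfying $(a_1\circ a_2)\circ a_3=a_1\circ(a_2\circ a_3)$, $(a_1\cdot a_2)\cdot a_3 - a_1\cdot (a_2\cdot a_3) = (a_1\cdot a_3)\cdot a_2- a_1\cdot (a_3\cdot a_2)$, $(a_1\circ a_2)\cdot a_3=(a_1\cdot a_3)\circ a_2 + a_1\circ (a_2\cdot a_3)$, for all $a_1,a_2,a_3\in A$. *)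

theory Defs
  imports Main
begin

definition vector_space_over :: "('k::field_char_0 \<Rightarrow> 'v::ab_group_add \<Rightarrow> 'v) \<Rightarrow> bool" where
  "vector_space_over sm \<longleftrightarrow>
     (\<forall>a x y. sm a (x + y) = sm a x + sm a y) \<and>
     (\<forall>a b x. sm (a + b) x = sm a x + sm b x) \<and>
     (\<forall>a b x. sm a (sm b x) = sm (a * b) x) \<and>
     (\<forall>x. sm 1 x = x)"

definition bilinear_op :: "('k::field_char_0 \<Rightarrow> 'v::ab_group_add \<Rightarrow> 'v) \<Rightarrow> ('v \<Rightarrow> 'v \<Rightarrow> 'v) \<Rightarrow> bool" where
  "bilinear_op sm m \<longleftrightarrow>
     (\<forall>x y z. m (x + y) z = m x z + m y z) \<and>
     (\<forall>x y z. m x (y + z) = m x y + m x z) \<and>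
     (\<forall>a x y. m (sm a x) y = sm a (m x y)) \<and>
     (\<forall>a x y. m x (sm a y) = sm a (m x y))"

definition pre_Lie_commutative_algebra ::
  "('k::field_char_0 \<Rightarrow> 'v::ab_group_add \<Rightarrow> 'v) \<Rightarrow> ('v \<Rightarrow> 'v \<Rightarrow> 'v) \<Rightarrow> ('v \<Rightarrow> 'v \<Rightarrow> 'v) \<Rightarrow> bool" where
  "pre_Lie_commutative_algebra sm circ dot \<longleftrightarrow>
     vector_space_over sm \<and> bilinear_op sm circ \<and> bilinear_op sm dot \<and>
     (\<forall>a b. circ a b = circ b a) \<and>
     (\<forall>a1 a2 a3. circ (circ a1 a2) a3 = circ a1 (circ a2 a3)) \<and>
     (\<forall>a1 a2 a3. dot (dot a1 a2) a3 - dot a1 (dot a2 a3) = dot (dot a1 a3) a2 - dot a1 (dot a3 a2)) \<and>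
     (\<forall>a1 a2 a3. dot (circ a1 a2) a3 = circ (dot a1 a3) a2 + circ a1 (dot a2 a3))"

definition Pmap :: "('v \<Rightarrow> 'v \<Rightarrow> 'v) \<Rightarrow> ('v::ab_group_add \<Rightarrow> 'v \<Rightarrow> 'v) \<Rightarrow> 'v \<Rightarrow> 'v \<Rightarrow> 'v \<Rightarrow> 'v" where
  "Pmap circ br a1 a2 a3 = br a1 (circ a2 a3) - circ (br a1 a2) a3 - circ a2 (br a1 a3)"

definition F_manifold_algebra ::
  "('k::field_char_0 \<Rightarrow> 'v::ab_group_add \<Rightarrow> 'v) \<Rightarrow> ('v \<Rightarrow> 'v \<Rightarrow> 'v) \<Rightarrow> ('v \<Rightarrow> 'v \<Rightarrow> 'v) \<Rightarrow> bool" where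
  "F_manifold_algebra sm circ br \<longleftrightarrow>
     vector_space_over sm \<and> bilinear_op sm circ \<and> bilinear_op sm br \<and>
     (\<forall>a b. circ a b = circ b a) \<and>
     (\<forall>a1 a2 a3. circ (circ a1 a2) a3 = circ a1 (circ a2 a3)) \<and>
     (\<forall>a b. br a b = - br b a) \<and>
     (\<forall>a1 a2 a3. br a1 (br a2 a3) + br a2 (br a3 a1) + br a3 (br a1 a2) = 0) \<and>
     (\<forall>a1 a2 a3 a4. Pmap circ br (circ a1 a2) a3 a4 =
          circ a1 (Pmap circ br a2 a3 a4) + circ a2 (Pmap circ br a1 a3 a4))"

end

theory Submission
  imports Defs
begin

theorem proposition12:
  fixes sm :: "'k::field_char_0 \<Rightarrow> 'v::ab_group_add \<Rightarrow> 'v"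
    and circ dot :: "'v \<Rightarrow> 'v \<Rightarrow> 'v"
  assumes "pre_Lie_commutative_algebra sm circ dot"
  shows "F_manifold_algebra sm circ (\<lambda>a1 a2. dot a1 a2 - dot a2 a1)"
proof -
  note A = assms[unfolded pre_Lie_commutative_algebra_def bilinear_op_def]
  have vs: "vector_space_over sm" using A by metis
  have cl: "\<And>x y z. circ (x + y) z = circ x z + circ y z" using A by metis
  have cr: "\<And>x y z. circ x (y + z) = circ x y + circ x z" using A by metis
  have dl: "\<And>x y z. dot (x + y) z = dot x z + dot y z" using A by metis
  have dr: "\<And>x y z. dot x (y + z) = dot x y + dot x z" using A by metis
  have csl: "\<And>a x y. circ (sm a x) y = sm a (circ x y)" using A by metis
  have csr: "\<And>a x y. circ x (sm a y) = sm a (circ x y)" using A by metis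
  have dsl: "\<And>a x y. dot (sm a x) y = sm a (dot x y)" using A by metis
  have dsr: "\<And>a x y. dot x (sm a y) = sm a (dot x y)" using A by metis
  have comm: "\<And>a b. circ a b = circ b a" using A by metis
  have ass: "\<And>a1 a2 a3. circ (circ a1 a2) a3 = circ a1 (circ a2 a3)" using A by metis
  have rs: "\<And>a1 a2 a3. dot (dot a1 a2) a3 - dot a1 (dot a2 a3) = dot (dot a1 a3) a2 - dot a1 (dot a3 a2)" using A by metis
  have cd: "\<And>a1 a2 a3. dot (circ a1 a2) a3 = circ (dot a1 a3) a2 + circ a1 (dot a2 a3)" using A by metis
  have cml: "\<And>x y z. circ (x - y) z = circ x z - circ y z"
    by (metis add_diff_cancel cl diff_add_cancel eq_diff_eq)
  have cmr: "\<And>x y z. circ z (x - y) = circ z x - circ z y"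
    by (metis add_diff_cancel cr diff_add_cancel eq_diff_eq)
  have dml: "\<And>x y z. dot (x - y) z = dot x z - dot y z"
    by (metis add_diff_cancel dl diff_add_cancel eq_diff_eq)
  have dmr: "\<And>x y z. dot z (x - y) = dot z x - dot z y"
    by (metis add_diff_cancel dr diff_add_cancel eq_diff_eq)
  let ?br = "\<lambda>a1 a2. dot a1 a2 - dot a2 a1"
  have bil: "bilinear_op sm ?br"
    unfolding bilinear_op_def
  proof (intro conjI allI)
    fix a x y
    have "sm a (dot x y - dot y x) = sm a (dot x y) - sm a (dot y x)"
      using vs unfolding vector_space_over_def
      by (metis add_diff_cancel diff_add_cancel)
    then show "?br (sm a x) y = sm a (?br x y)" "?br x (sm a y) = sm a (?br x y)"
      by (simp_all add: dsl dsr)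
  qed (simp_all add: dl dr algebra_simps)
  have jac: "?br a (?br b c) + ?br b (?br c a) + ?br c (?br a b) = 0" for a b c
  proof -
    have r1: "dot (dot a c) b = dot a (dot c b) - dot a (dot b c) + dot (dot a b) c"
      using rs[of a b c] by (simp add: algebra_simps)
    have r2: "dot (dot b a) c = dot b (dot a c) - dot b (dot c a) + dot (dot b c) a"
      using rs[of b c a] by (simp add: algebra_simps)
    have r3: "dot (dot c b) a = dot c (dot b a) - dot c (dot a b) + dot (dot c a) b"
      using rs[of c a b] by (simp add: algebra_simps)
    show ?thesis by (simp add: dml dmr r1 r2 r3 algebra_simps)
  qed
  have P: "Pmap circ ?br a b c = dot a (circ b c) - circ (dot a b) c - circ b (dot a c)" for a b c
    unfolding Pmap_def by (simp add: dml dmr cml cmr cd algebra_simps)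
  have hm: "Pmap circ ?br (circ a1 a2) a3 a4 =
          circ a1 (Pmap circ ?br a2 a3 a4) + circ a2 (Pmap circ ?br a1 a3 a4)" for a1 a2 a3 a4
  proof -
    have e: "circ a2 (circ a1 x) = circ a1 (circ a2 x)" for x
      by (metis ass comm)
    have t1: "dot (circ a1 a2) (circ a3 a4) = circ a2 (dot a1 (circ a3 a4)) + circ a1 (dot a2 (circ a3 a4))"
      using cd comm by metis
    have t2: "circ (dot (circ a1 a2) a3) a4 = circ a2 (circ (dot a1 a3) a4) + circ a1 (circ (dot a2 a3) a4)"
    proof -
      have "circ (dot (circ a1 a2) a3) a4 = circ (circ (dot a1 a3) a2) a4 + circ (circ a1 (dot a2 a3)) a4"
        by (simp add: cd cl)
      also have "circ (circ (dot a1 a3) a2) a4 = circ a2 (circ (dot a1 a3) a4)"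
        by (metis ass comm)
      also have "circ (circ a1 (dot a2 a3)) a4 = circ a1 (circ (dot a2 a3) a4)"
        by (metis ass comm)
      finally show ?thesis .
    qed
    have t3: "circ a3 (dot (circ a1 a2) a4) = circ a2 (circ a3 (dot a1 a4)) + circ a1 (circ a3 (dot a2 a4))"
    proof -
      have "circ a3 (dot (circ a1 a2) a4) = circ a3 (circ (dot a1 a4) a2) + circ a3 (circ a1 (dot a2 a4))"
        by (simp add: cd cr)
      also have "circ a3 (circ (dot a1 a4) a2) = circ a2 (circ a3 (dot a1 a4))"
        by (metis ass comm)
      also have "circ a3 (circ a1 (dot a2 a4)) = circ a1 (circ a3 (dot a2 a4))"
        by (metis ass comm)
      finally show ?thesis by (simp add: add.commute)
    qed
    show ?thesis unfolding P t1 t2 t3 cmr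
      by (simp add: algebra_simps)
  qed
  have bc: "bilinear_op sm circ" unfolding bilinear_op_def using cl cr csl csr by blast
  have sk: "\<And>a b. ?br a b = - ?br b a" by simp
  show ?thesis unfolding F_manifold_algebra_def
    using vs bil bc comm ass jac hm sk by blast
qed

end
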